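(* Let $\mathcal{A}$ be a finite set of alternatives, $N\ge2$, $i\in\{1,\dots,N\}$, and $w:\underline{\mathcal{P}}^N\to\underline{\mathcal{P}}$. Then (the restriction to $\mathcal{P}^N$ of) $w$ has a dictator at individual $i$ if and only if for every $p\in\mathcal{P}^N$: $+_i(p,w(p))=p$.
   Context: $\mathcal{P}$ is the set of weak orders on $\mathcal{A}$; $\underline{\mathcal{P}}=\mathcal{P}\cup\{\mathbf{c}\}$ with a new element $\mathbf{c}$; $\mathcal{P}^N$ and $\underline{\mathcal{P}}^N$ are the sets of $N$-tuples (profiles) over $\mathcal{P}$ and $\underline{\mathcal{P}}$. Strictness order: for weak orders, $r\le s$ iff every strict preference of $s$ is a strict preference of $r$; $\mathbf{c}$ is added as bottom element; $\mathbf{i}$ (total indifference) is the top. $\vee$ is least upper bound. $r+s=r\vee s$ if $r,s\in\mathcal{P}$, and $r+s=\mathbf{i}$ if $r=\mathbf{c}$ or $s=\mathbf{c}$. The map $+_i:\underline{\mathcal{P}}^N\times\underline{\mathcal{P}}\to\underline{\mathcal{P}}^N$ is $+_i((p_1,\dots,p_i,\dots,p_N),r)=(p_1,\dots,p_i+r,\dots,p_N)$. $w$ has a dictator at $i$ if for all $p\in\mathcal{P}^N$: (1) $w(p)=\mathbf{c}$ implies $p_i=\mathbf{i}$; (2) $p_i\ne\mathbf{i}$ implies $w(p)\le p_i$. *)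

theory Defs
  imports Main
begin

text \<open>Weak orders (complete preorders) on a carrier A, as relations R with (x,y) in R
  meaning x is weakly preferred to y.\<close>
definition weak_order :: "'a set \<Rightarrow> ('a \<times> 'a) set \<Rightarrow> bool" where
  "weak_order A R \<longleftrightarrow> R \<subseteq> A \<times> A \<and> refl_on A R \<and> trans R \<and> total_on A R"

definition Pset :: "'a set \<Rightarrow> ('a \<times> 'a) set set" where
  "Pset A = {R. weak_order A R}"

text \<open>Extended set: None plays the role of the new element c.\<close>
definition Pbar :: "'a set \<Rightarrow> ('a \<times> 'a) set option set" where
  "Pbar A = Some ` Pset A \<union> {None}"

definition strict_part :: "('a \<times> 'a) set \<Rightarrow> ('a \<times> 'a) set" where
  "strict_part R = {(x, y). (x, y) \<in> R \<and> (y, x) \<notin> R}"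

definition indiff :: "'a set \<Rightarrow> ('a \<times> 'a) set" where
  "indiff A = A \<times> A"

definition wo_le :: "('a \<times> 'a) set \<Rightarrow> ('a \<times> 'a) set \<Rightarrow> bool" where
  "wo_le r s \<longleftrightarrow> strict_part s \<subseteq> strict_part r"

definition ext_le :: "('a \<times> 'a) set option \<Rightarrow> ('a \<times> 'a) set option \<Rightarrow> bool" where
  "ext_le u v \<longleftrightarrow> u = None \<or> (\<exists>r s. u = Some r \<and> v = Some s \<and> wo_le r s)"

definition wo_join :: "'a set \<Rightarrow> ('a \<times> 'a) set \<Rightarrow> ('a \<times> 'a) set \<Rightarrow> ('a \<times> 'a) set" where
  "wo_join A r s = (THE u. u \<in> Pset A \<and> wo_le r u \<and> wo_le s u \<and>
      (\<forall>v \<in> Pset A. wo_le r v \<and> wo_le s v \<longrightarrow> wo_le u v))"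

definition wo_plus :: "'a set \<Rightarrow> ('a \<times> 'a) set option \<Rightarrow> ('a \<times> 'a) set option \<Rightarrow> ('a \<times> 'a) set option" where
  "wo_plus A u v = (case (u, v) of (Some r, Some s) \<Rightarrow> Some (wo_join A r s)
                                 | _ \<Rightarrow> Some (indiff A))"

text \<open>Profiles are lists of length N; individuals are indexed 0..N-1.\<close>
definition plus_at :: "'a set \<Rightarrow> nat \<Rightarrow> ('a \<times> 'a) set option list \<Rightarrow> ('a \<times> 'a) set option
    \<Rightarrow> ('a \<times> 'a) set option list" where
  "plus_at A i p r = p[i := wo_plus A (p ! i) r]"

definition profiles :: "'a set \<Rightarrow> nat \<Rightarrow> ('a \<times> 'a) set option list set" where
  "profiles A N = {p. length p = N \<and> set p \<subseteq> Some ` Pset A}"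

definition profiles_bar :: "'a set \<Rightarrow> nat \<Rightarrow> ('a \<times> 'a) set option list set" where
  "profiles_bar A N = {p. length p = N \<and> set p \<subseteq> Pbar A}"

definition has_dictator ::
  "'a set \<Rightarrow> nat \<Rightarrow> (('a \<times> 'a) set option list \<Rightarrow> ('a \<times> 'a) set option) \<Rightarrow> nat \<Rightarrow> bool" where
  "has_dictator A N w i \<longleftrightarrow> (\<forall>p \<in> profiles A N.
      (w p = None \<longrightarrow> p ! i = Some (indiff A)) \<and>
      (p ! i \<noteq> Some (indiff A) \<longrightarrow> ext_le (w p) (p ! i)))"

end

theory Submission
  imports Defs
begin

lemma wo_strict_eq:
  assumes "weak_order A R" "weak_order A S" "strict_part R = strict_part S"
  shows "R = S"
proof -
  have key: "\<And>T. weak_order A T \<Longrightarrow> T = {(x,y). x \<in> A \<and> y \<in> A \<and> (y,x) \<notin> strict_part T}"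
  proof -
    fix T assume "weak_order A T"
    hence T: "T \<subseteq> A \<times> A" "refl_on A T" "total_on A T" unfolding weak_order_def by auto
    show "T = {(x,y). x \<in> A \<and> y \<in> A \<and> (y,x) \<notin> strict_part T}"
    proof (intro set_eqI iffI)
      fix q assume "q \<in> T"
      then obtain x y where q: "q = (x,y)" "(x,y) \<in> T" by (cases q) auto
      thus "q \<in> {(x,y). x \<in> A \<and> y \<in> A \<and> (y,x) \<notin> strict_part T}"
        using T(1) unfolding strict_part_def by auto
    next
      fix q assume "q \<in> {(x,y). x \<in> A \<and> y \<in> A \<and> (y,x) \<notin> strict_part T}"
      then obtain x y where q: "q = (x,y)" "x \<in> A" "y \<in> A" "(y,x) \<notin> strict_part T" by auto
      show "q \<in> T"
      proof (cases "x = y")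
        case True thus ?thesis using q T(2) unfolding refl_on_def by auto
      next
        case False
        hence "(x,y) \<in> T \<or> (y,x) \<in> T" using q T(3) unfolding total_on_def by auto
        thus ?thesis using q(1,4) unfolding strict_part_def by auto
      qed
    qed
  qed
  show ?thesis using key[OF assms(1)] key[OF assms(2)] assms(3) by simp
qed

definition up_sets :: "'a set \<Rightarrow> ('a \<times> 'a) set \<Rightarrow> 'a set set" where
  "up_sets A R = {U. U \<subseteq> A \<and> (\<forall>x y. x \<in> U \<longrightarrow> y \<in> A \<longrightarrow> (y,x) \<in> R \<longrightarrow> y \<in> U)}"

lemma up_chain:
  assumes "weak_order A R" "U \<in> up_sets A R" "V \<in> up_sets A R"
  shows "U \<subseteq> V \<or> V \<subseteq> U"
proof (rule ccontr)
  assume "\<not> (U \<subseteq> V \<or> V \<subseteq> U)"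
  then obtain x y where "x \<in> U" "x \<notin> V" "y \<in> V" "y \<notin> U" by blast
  moreover have "x \<in> A" "y \<in> A" using assms calculation unfolding up_sets_def by auto
  moreover have "x \<noteq> y" using calculation by auto
  moreover have "total_on A R" using assms(1) unfolding weak_order_def by auto
  ultimately have "(x,y) \<in> R \<or> (y,x) \<in> R" unfolding total_on_def by auto
  thus False using assms(2,3) \<open>x \<in> U\<close> \<open>x \<notin> V\<close> \<open>y \<in> V\<close> \<open>y \<notin> U\<close> \<open>x \<in> A\<close> \<open>y \<in> A\<close>
    unfolding up_sets_def by blast
qed

lemma join_exists:
  assumes r: "weak_order A r" and s: "weak_order A s"
  shows "\<exists>u. u \<in> Pset A \<and> wo_le r u \<and> wo_le s u \<and>
      (\<forall>v \<in> Pset A. wo_le r v \<and> wo_le s v \<longrightarrow> wo_le u v)"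
proof -
  define C where "C = up_sets A r \<inter> up_sets A s"
  define u where "u = {(x,y). x \<in> A \<and> y \<in> A \<and> (\<forall>U \<in> C. y \<in> U \<longrightarrow> x \<in> U)}"
  have chain: "\<And>U V. U \<in> C \<Longrightarrow> V \<in> C \<Longrightarrow> U \<subseteq> V \<or> V \<subseteq> U"
    using up_chain[OF r] unfolding C_def by blast
  have wo: "weak_order A u"
    unfolding weak_order_def
  proof (intro conjI)
    show "u \<subseteq> A \<times> A" unfolding u_def by auto
    show "refl_on A u" unfolding refl_on_def u_def by auto
    show "trans u" unfolding trans_def u_def by blast
    show "total_on A u" unfolding total_on_def
    proof (intro ballI impI)
      fix x y assume xy: "x \<in> A" "y \<in> A" "x \<noteq> y"
      show "(x, y) \<in> u \<or> (y, x) \<in> u"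
      proof (rule ccontr)
        assume "\<not> ?thesis"
        then obtain U V where "U \<in> C" "y \<in> U" "x \<notin> U" "V \<in> C" "x \<in> V" "y \<notin> V"
          using xy unfolding u_def by auto
        thus False using chain by blast
      qed
    qed
  qed
  have sp: "\<And>R. weak_order A R \<Longrightarrow> C \<subseteq> up_sets A R \<Longrightarrow> wo_le R u"
  proof -
    fix R assume R: "weak_order A R" and CR: "C \<subseteq> up_sets A R"
    show "wo_le R u" unfolding wo_le_def
    proof
      fix p assume "p \<in> strict_part u"
      then obtain x y where p: "p = (x,y)" "(x,y) \<in> u" "(y,x) \<notin> u"
        unfolding strict_part_def by auto
      then obtain U where U: "U \<in> C" "x \<in> U" "y \<notin> U" "x \<in> A" "y \<in> A"
        unfolding u_def by auto
      have "(y,x) \<notin> R" using U CR unfolding up_sets_def by blast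
      moreover have "x \<noteq> y" using U by auto
      ultimately have "(x,y) \<in> R" using R U unfolding weak_order_def total_on_def by blast
      thus "p \<in> strict_part R" using p \<open>(y,x) \<notin> R\<close> unfolding strict_part_def by auto
    qed
  qed
  have least: "\<forall>v \<in> Pset A. wo_le r v \<and> wo_le s v \<longrightarrow> wo_le u v"
  proof (intro ballI impI)
    fix v assume "v \<in> Pset A" and rs: "wo_le r v \<and> wo_le s v"
    hence v: "weak_order A v" unfolding Pset_def by auto
    show "wo_le u v" unfolding wo_le_def
    proof
      fix p assume "p \<in> strict_part v"
      then obtain x y where p: "p = (x,y)" "(x,y) \<in> v" "(y,x) \<notin> v"
        unfolding strict_part_def by auto
      have xyA: "x \<in> A" "y \<in> A" using p v unfolding weak_order_def by auto
      define U where "U = {z \<in> A. (y,z) \<notin> v}"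
      have upR: "U \<in> up_sets A R" if R: "weak_order A R" and vR: "wo_le R v" for R
        unfolding up_sets_def
      proof (intro CollectI conjI allI impI)
        show "U \<subseteq> A" unfolding U_def by auto
        fix z z' assume z: "z \<in> U" "z' \<in> A" "(z',z) \<in> R"
        show "z' \<in> U"
        proof (rule ccontr)
          assume "z' \<notin> U"
          hence yz': "(y,z') \<in> v" using z unfolding U_def by auto
          have zA: "z \<in> A" "(y,z) \<notin> v" using z unfolding U_def by auto
          have vt: "trans v" and vto: "total_on A v" and vr: "refl_on A v"
            using v unfolding weak_order_def by auto
          have "z \<noteq> y" using zA vr xyA unfolding refl_on_def by auto
          hence "(z,y) \<in> v" using zA xyA vto unfolding total_on_def by blast
          hence "(z,z') \<in> v" using yz' vt by (meson transD)
          moreover have "(z',z) \<notin> v" using yz' zA vt by (meson transD)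
          ultimately have "(z,z') \<in> strict_part v" unfolding strict_part_def by auto
          hence "(z,z') \<in> strict_part R" using vR unfolding wo_le_def by auto
          thus False using z unfolding strict_part_def by auto
        qed
      qed
      have UC: "U \<in> C" unfolding C_def using upR r s rs by auto
      have "x \<in> U" "y \<notin> U" using p xyA v unfolding U_def weak_order_def refl_on_def by auto
      hence nyx: "(y,x) \<notin> u" using UC unfolding u_def by auto
      have "(x,y) \<in> strict_part r" "(x,y) \<in> strict_part s"
        using rs p unfolding wo_le_def strict_part_def by auto
      hence xyr: "(x,y) \<in> r" unfolding strict_part_def by auto
      have "\<forall>V \<in> C. y \<in> V \<longrightarrow> x \<in> V"
      proof (intro ballI impI)
        fix V assume "V \<in> C" "y \<in> V"
        hence "V \<in> up_sets A r" unfolding C_def by auto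
        thus "x \<in> V" using \<open>y \<in> V\<close> xyr xyA unfolding up_sets_def by blast
      qed
      hence "(x,y) \<in> u" using xyA unfolding u_def by auto
      thus "p \<in> strict_part u" using nyx p unfolding strict_part_def by auto
    qed
  qed
  have "u \<in> Pset A" using wo unfolding Pset_def by simp
  moreover have "wo_le r u" by (rule sp[OF r]) (simp add: C_def)
  moreover have "wo_le s u" by (rule sp[OF s]) (simp add: C_def)
  ultimately show ?thesis using least by blast
qed

lemma join_unique:
  assumes "u \<in> Pset A \<and> wo_le r u \<and> wo_le s u \<and> (\<forall>v \<in> Pset A. wo_le r v \<and> wo_le s v \<longrightarrow> wo_le u v)"
      and "u' \<in> Pset A \<and> wo_le r u' \<and> wo_le s u' \<and> (\<forall>v \<in> Pset A. wo_le r v \<and> wo_le s v \<longrightarrow> wo_le u' v)"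
  shows "u = u'"
proof -
  have "wo_le u u'" "wo_le u' u" using assms by auto
  hence "strict_part u = strict_part u'" unfolding wo_le_def by auto
  moreover have "weak_order A u" "weak_order A u'" using assms unfolding Pset_def by auto
  ultimately show ?thesis using wo_strict_eq by metis
qed

lemma join_prop:
  assumes "r \<in> Pset A" "s \<in> Pset A"
  shows "wo_join A r s \<in> Pset A \<and> wo_le r (wo_join A r s) \<and> wo_le s (wo_join A r s)"
proof -
  have ex: "\<exists>!u. u \<in> Pset A \<and> wo_le r u \<and> wo_le s u \<and>
      (\<forall>v \<in> Pset A. wo_le r v \<and> wo_le s v \<longrightarrow> wo_le u v)"
  proof -
    obtain u where u: "u \<in> Pset A \<and> wo_le r u \<and> wo_le s u \<and>
      (\<forall>v \<in> Pset A. wo_le r v \<and> wo_le s v \<longrightarrow> wo_le u v)"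
      using join_exists[of A r s] assms unfolding Pset_def by auto
    show ?thesis by (rule ex1I[of _ u]) (rule u, rule join_unique[OF _ u])
  qed
  show ?thesis using theI'[OF ex] unfolding wo_join_def by blast
qed

lemma join_le:
  assumes "r \<in> Pset A" "s \<in> Pset A" "wo_le r s"
  shows "wo_join A s r = s"
proof -
  have P: "s \<in> Pset A \<and> wo_le s s \<and> wo_le r s \<and>
      (\<forall>v \<in> Pset A. wo_le s v \<and> wo_le r v \<longrightarrow> wo_le s v)"
    using assms unfolding wo_le_def by auto
  show ?thesis unfolding wo_join_def
  proof (rule the_equality)
    show "s \<in> Pset A \<and> wo_le s s \<and> wo_le r s \<and>
      (\<forall>v \<in> Pset A. wo_le s v \<and> wo_le r v \<longrightarrow> wo_le s v)" using P .
    fix u assume "u \<in> Pset A \<and> wo_le s u \<and> wo_le r u \<and>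
      (\<forall>v \<in> Pset A. wo_le s v \<and> wo_le r v \<longrightarrow> wo_le u v)"
    thus "u = s" using join_unique[OF _ P] by blast
  qed
qed

lemma indiff_Pset: "indiff A \<in> Pset A"
  unfolding Pset_def weak_order_def indiff_def refl_on_def trans_def total_on_def by auto

lemma le_indiff: "wo_le r (indiff A)"
  unfolding wo_le_def strict_part_def indiff_def by auto

theorem proposition4:
  fixes A :: "'a set" and N i :: nat
    and w :: "('a \<times> 'a) set option list \<Rightarrow> ('a \<times> 'a) set option"
  assumes "finite A" and "N \<ge> 2" and "i < N"
    and "\<forall>p \<in> profiles_bar A N. w p \<in> Pbar A"
  shows "has_dictator A N w i \<longleftrightarrow> (\<forall>p \<in> profiles A N. plus_at A i p (w p) = p)"
proof -
  have pi: "\<And>p. p \<in> profiles A N \<Longrightarrow> \<exists>s. p ! i = Some s \<and> s \<in> Pset A"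
  proof -
    fix p assume "p \<in> profiles A N"
    hence "length p = N" "set p \<subseteq> Some ` Pset A" unfolding profiles_def by auto
    hence "p ! i \<in> Some ` Pset A" using assms(3) nth_mem[of i p] by auto
    thus "\<exists>s. p ! i = Some s \<and> s \<in> Pset A" by auto
  qed
  have wp: "\<And>p. p \<in> profiles A N \<Longrightarrow> w p = None \<or> (\<exists>r. w p = Some r \<and> r \<in> Pset A)"
  proof -
    fix p assume "p \<in> profiles A N"
    hence "p \<in> profiles_bar A N" unfolding profiles_def profiles_bar_def Pbar_def by auto
    hence "w p \<in> Pbar A" using assms(4) by auto
    thus "w p = None \<or> (\<exists>r. w p = Some r \<and> r \<in> Pset A)" unfolding Pbar_def by auto
  qed
  have upd: "\<And>(p :: ('a \<times> 'a) set option list) X. i < length p \<Longrightarrow> p[i := X] = p \<longleftrightarrow> X = p ! i"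
  proof -
    fix p :: "('a \<times> 'a) set option list" and X assume "i < length p"
    show "p[i := X] = p \<longleftrightarrow> X = p ! i"
    proof
      assume "p[i := X] = p"
      hence "p[i := X] ! i = p ! i" by simp
      thus "X = p ! i" using \<open>i < length p\<close> by simp
    qed simp
  qed
  have pl: "\<And>p. p \<in> profiles A N \<Longrightarrow> plus_at A i p (w p) = p \<longleftrightarrow> wo_plus A (p ! i) (w p) = p ! i"
  proof -
    fix p assume "p \<in> profiles A N"
    hence "i < length p" using assms(3) unfolding profiles_def by auto
    thus "plus_at A i p (w p) = p \<longleftrightarrow> wo_plus A (p ! i) (w p) = p ! i"
      unfolding plus_at_def by (rule upd)
  qed
  show ?thesis
  proof
    assume d: "has_dictator A N w i"
    show "\<forall>p \<in> profiles A N. plus_at A i p (w p) = p"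
    proof
      fix p assume p: "p \<in> profiles A N"
      obtain s where s: "p ! i = Some s" "s \<in> Pset A" using pi[OF p] by blast
      have "wo_plus A (p ! i) (w p) = p ! i"
      proof (cases "w p")
        case None
        thus ?thesis using d p s unfolding has_dictator_def wo_plus_def by auto
      next
        case (Some r)
        hence r: "r \<in> Pset A" using wp[OF p] by auto
        have "wo_le r s"
        proof (cases "s = indiff A")
          case True thus ?thesis using le_indiff by simp
        next
          case False thus ?thesis using d p s Some unfolding has_dictator_def ext_le_def by auto
        qed
        thus ?thesis using join_le[OF r s(2)] s Some unfolding wo_plus_def by auto
      qed
      thus "plus_at A i p (w p) = p" using pl[OF p] by simp
    qed
  next
    assume h: "\<forall>p \<in> profiles A N. plus_at A i p (w p) = p"
    show "has_dictator A N w i" unfolding has_dictator_def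
    proof
      fix p assume p: "p \<in> profiles A N"
      obtain s where s: "p ! i = Some s" "s \<in> Pset A" using pi[OF p] by blast
      have e: "wo_plus A (p ! i) (w p) = p ! i" using h p pl by blast
      show "(w p = None \<longrightarrow> p ! i = Some (indiff A)) \<and>
          (p ! i \<noteq> Some (indiff A) \<longrightarrow> ext_le (w p) (p ! i))"
      proof (cases "w p")
        case None
        thus ?thesis using e s unfolding wo_plus_def ext_le_def by auto
      next
        case (Some r)
        hence r: "r \<in> Pset A" using wp[OF p] by auto
        have "wo_join A s r = s" using e s Some unfolding wo_plus_def by auto
        hence "wo_le r s" using join_prop[OF s(2) r] by simp
        thus ?thesis using Some s unfolding ext_le_def by auto
      qed
    qed
  qed
qed

end
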